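(* For every $\rho\in(0,\tfrac12)$, the scalar equation $x'=-\bigl(x+\tfrac12\bigr)^2$ has the conditional Lipschitz shadowing property in $[-\rho,\infty)$.
   Context: For continuous $g\colon[0,\infty)\times\mathbb R\to\mathbb R$ and $\tau\in(0,\infty]$, a pseudosolution of $x'=g(t,x)$ on $[0,\tau)$ is a $C^1$ map $y\colon[0,\tau)\to\mathbb R$ with $\sigma_y:=\sup_{0\le t<\tau}|y'(t)-g(t,y(t))|<\infty$. The equation has the conditional Lipschitz shadowing property in $H\neq\emptyset$ if there exist $\varepsilon_0,\kappa>0$ such that whenever $0<\varepsilon\le\varepsilon_0$ and $y$ is a pseudosolution on $[0,\tau)$ ($\tau\in(0,\infty]$) with $\sigma_y\le\varepsilon$ and $y(t)\in H$ for all $t\in[0,\tau)$, there is a solution $x$ of the equation defined on $[0,\tau)$ with $\sup_{0\le t<\tau}|x(t)-y(t)|\le\kappa\varepsilon$. *)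

theory Defs
  imports "HOL-Analysis.Analysis"
begin

definition time_dom :: "ereal \<Rightarrow> real set" where
  "time_dom \<tau> = {t. 0 \<le> t \<and> ereal t < \<tau>}"

definition C1_with_deriv :: "ereal \<Rightarrow> (real \<Rightarrow> real) \<Rightarrow> (real \<Rightarrow> real) \<Rightarrow> bool" where
  "C1_with_deriv \<tau> y y' \<longleftrightarrow>
     (\<forall>t\<in>time_dom \<tau>. (y has_real_derivative y' t) (at t within time_dom \<tau>)) \<and>
     continuous_on (time_dom \<tau>) y'"

definition pseudosolution_le ::
  "(real \<Rightarrow> real \<Rightarrow> real) \<Rightarrow> ereal \<Rightarrow> (real \<Rightarrow> real) \<Rightarrow> real \<Rightarrow> bool" where
  "pseudosolution_le g \<tau> y \<epsilon> \<longleftrightarrow>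
     (\<exists>y'. C1_with_deriv \<tau> y y' \<and> (\<forall>t\<in>time_dom \<tau>. \<bar>y' t - g t (y t)\<bar> \<le> \<epsilon>))"

definition solution_on :: "(real \<Rightarrow> real \<Rightarrow> real) \<Rightarrow> ereal \<Rightarrow> (real \<Rightarrow> real) \<Rightarrow> bool" where
  "solution_on g \<tau> x \<longleftrightarrow>
     (\<forall>t\<in>time_dom \<tau>. (x has_real_derivative g t (x t)) (at t within time_dom \<tau>))"

definition cond_lipschitz_shadowing :: "(real \<Rightarrow> real \<Rightarrow> real) \<Rightarrow> real set \<Rightarrow> bool" where
  "cond_lipschitz_shadowing g H \<longleftrightarrow>
     (\<exists>\<epsilon>0>0. \<exists>\<kappa>>0. \<forall>\<epsilon> \<tau> y.
        0 < \<epsilon> \<and> \<epsilon> \<le> \<epsilon>0 \<and> 0 < \<tau> \<and> pseudosolution_le g \<tau> y \<epsilon> \<and>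
        (\<forall>t\<in>time_dom \<tau>. y t \<in> H) \<longrightarrow>
        (\<exists>x. solution_on g \<tau> x \<and> (\<forall>t\<in>time_dom \<tau>. \<bar>x t - y t\<bar> \<le> \<kappa> * \<epsilon>)))"

end

theory Submission
  imports Defs
begin
lemma barrier:
  fixes \<phi> \<phi>' :: "real \<Rightarrow> real" and T :: real
  assumes T: "0 \<le> T"
    and d: "\<And>t. t \<in> {0..T} \<Longrightarrow> (\<phi> has_real_derivative \<phi>' t) (at t within {0..T})"
    and z: "\<phi> 0 \<le> 0"
    and neg: "\<And>t. t \<in> {0..T} \<Longrightarrow> \<phi> t > 0 \<Longrightarrow> \<phi>' t < 0"
  shows "\<phi> T \<le> 0"
proof (rule ccontr)
  assume "\<not> \<phi> T \<le> 0"
  hence pT: "\<phi> T > 0" by simp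
  have cont: "continuous_on {0..T} \<phi>" using d by (rule DERIV_continuous_on)
  define S where "S = {0..T} \<inter> \<phi> -` {..0}"
  have "closed S" unfolding S_def by (rule continuous_closed_preimage[OF cont]) auto
  hence "compact S" unfolding S_def by (simp add: compact_eq_bounded_closed bounded_Int)
  moreover have "0 \<in> S" using T z by (simp add: S_def)
  ultimately obtain t0 where t0: "t0 \<in> S" "\<And>s. s \<in> S \<Longrightarrow> s \<le> t0"
    using compact_attains_sup by (metis empty_iff)
  have t0T: "t0 < T" using t0(1) pT unfolding S_def by (cases "t0 = T") auto
  have "\<exists>x\<in>{t0<..<T}. \<phi> T - \<phi> t0 = (\<lambda>h. \<phi>' x * h) (T - t0)"
  proof (rule mvt_simple[OF t0T])
    fix x assume "t0 \<le> x" "x \<le> T"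
    moreover have "0 \<le> t0" using t0(1) by (simp add: S_def)
    ultimately have "x \<in> {0..T}" "{t0..T} \<subseteq> {0..T}" by auto
    from has_field_derivative_subset[OF d[OF this(1)] this(2)]
    show "(\<phi> has_derivative (\<lambda>h. \<phi>' x * h)) (at x within {t0..T})"
      by (simp add: has_field_derivative_def)
  qed
  then obtain x where x: "x \<in> {t0<..<T}" "\<phi> T - \<phi> t0 = (T - t0) * \<phi>' x" by auto
  have x0: "x \<in> {0..T}" using x(1) t0(1) by (auto simp: S_def)
  have "\<phi> x > 0"
  proof (rule ccontr)
    assume "\<not> \<phi> x > 0"
    hence "x \<in> S" using x0 by (simp add: S_def)
    thus False using t0(2) x(1) by fastforce
  qed
  hence "\<phi>' x < 0" using neg x0 by blast
  hence "(T - t0) * \<phi>' x < 0" using t0T by (simp add: mult_pos_neg)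
  moreover have "\<phi> t0 \<le> 0" using t0(1) by (simp add: S_def)
  ultimately show False using x(2) pT by linarith
qed
lemma alg:
  fixes a b \<delta> \<epsilon> :: real
  assumes "\<delta> > 0" "a \<ge> \<delta>" "b > 0" "a - b > \<epsilon> / \<delta>" "\<epsilon> > 0"
  shows "(a + b) * (a - b) > \<epsilon>"
proof -
  have "a - b > 0" using assms by (smt (verit) divide_pos_pos)
  hence "(a + b) * (a - b) \<ge> \<delta> * (a - b)" using assms by (intro mult_right_mono) auto
  moreover have "\<epsilon> < (a - b) * \<delta>" using assms pos_divide_less_eq[OF assms(1)] by blast
  ultimately show ?thesis by (simp add: mult.commute)
qed

lemma alg2:
  fixes a b \<delta> \<epsilon> :: real
  assumes "\<delta> > 0" "a \<ge> \<delta>" "b > 0" "b - a > \<epsilon> / \<delta>" "\<epsilon> > 0"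
  shows "(b + a) * (b - a) > \<epsilon>"
proof -
  have "b - a > 0" using assms by (smt (verit) divide_pos_pos)
  hence "(b + a) * (b - a) \<ge> \<delta> * (b - a)" using assms by (intro mult_right_mono) auto
  moreover have "\<epsilon> < (b - a) * \<delta>" using assms pos_divide_less_eq[OF assms(1)] by blast
  ultimately show ?thesis by (simp add: mult.commute)
qed

theorem mainTheorem11:
  fixes \<rho> :: real
  assumes "0 < \<rho>" and "\<rho> < 1/2"
  shows "cond_lipschitz_shadowing (\<lambda>t x. - ((x + 1/2)^2)) {-\<rho>..}"
proof -
  define \<delta> where "\<delta> = 1/2 - \<rho>"
  have \<delta>: "\<delta> > 0" using assms by (simp add: \<delta>_def)
  show ?thesis unfolding cond_lipschitz_shadowing_def
  proof (rule exI[of _ 1], intro conjI exI[of _ "1/\<delta>"] allI impI)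
    show "(0::real) < 1" by simp
    fix \<epsilon> :: real and \<tau> :: ereal and y :: "real \<Rightarrow> real"
    assume H: "0 < \<epsilon> \<and> \<epsilon> \<le> 1 \<and> 0 < \<tau> \<and> pseudosolution_le (\<lambda>t x. - ((x + 1/2)^2)) \<tau> y \<epsilon> \<and>
        (\<forall>t\<in>time_dom \<tau>. y t \<in> {-\<rho>..})"
    then obtain y' where yd: "\<And>t. t \<in> time_dom \<tau> \<Longrightarrow> (y has_real_derivative y' t) (at t within time_dom \<tau>)"
      and ye: "\<And>t. t \<in> time_dom \<tau> \<Longrightarrow> \<bar>y' t + (y t + 1/2)^2\<bar> \<le> \<epsilon>"
      unfolding pseudosolution_le_def C1_with_deriv_def by auto
    have \<epsilon>: "\<epsilon> > 0" using H by simp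
    have yH: "\<And>t. t \<in> time_dom \<tau> \<Longrightarrow> y t + 1/2 \<ge> \<delta>" using H by (auto simp: \<delta>_def)
    have z: "0 \<in> time_dom \<tau>" using H by (simp add: time_dom_def zero_ereal_def)
    define v0 where "v0 = y 0 + 1/2"
    have v0: "v0 > 0" using yH[OF z] \<delta> by (simp add: v0_def)
    define x where "x t = v0 / (1 + v0 * t) - 1/2" for t
    have xpos: "x t + 1/2 > 0" if "t \<ge> 0" for t
    proof -
      have "1 + v0 * t > 0" using v0 that by (simp add: add_pos_nonneg)
      thus ?thesis using v0 by (simp add: x_def)
    qed
    have xd: "(x has_real_derivative - ((x t + 1/2)^2)) (at t)" if "t \<ge> 0" for t
    proof -
      have ne: "1 + v0 * t \<noteq> 0" using v0 that by (smt (verit) mult_nonneg_nonneg)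
      have "(x has_real_derivative (- (v0 * v0) / (1 + v0 * t)^2)) (at t)"
        unfolding x_def using ne
        by (auto intro!: derivative_eq_intros simp: power2_eq_square)
      moreover have "- (v0 * v0) / (1 + v0 * t)^2 = - ((x t + 1/2)^2)"
        by (simp add: x_def power_divide power2_eq_square)
      ultimately show ?thesis by simp
    qed
    show "\<exists>x. solution_on (\<lambda>t x. - ((x + 1/2)^2)) \<tau> x \<and> (\<forall>t\<in>time_dom \<tau>. \<bar>x t - y t\<bar> \<le> 1/\<delta> * \<epsilon>)"
    proof (intro exI[of _ x] conjI ballI)
      show "solution_on (\<lambda>t x. - ((x + 1/2)^2)) \<tau> x"
        unfolding solution_on_def
        by (auto intro!: has_field_derivative_at_within xd simp: time_dom_def)
    next
      fix t assume t: "t \<in> time_dom \<tau>"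
      have t0: "0 \<le> t" using t by (simp add: time_dom_def)
      have sub: "{0..t} \<subseteq> time_dom \<tau>"
        using t by (auto simp: time_dom_def) (meson ereal_less_eq(3) le_less_trans)
      have wd: "((\<lambda>s. y s - x s) has_real_derivative (y' s + (x s + 1/2)^2)) (at s within {0..t})"
        if "s \<in> {0..t}" for s
      proof -
        have "(y has_real_derivative y' s) (at s within {0..t})"
          using has_field_derivative_subset[OF yd sub] that sub by auto
        moreover have "(x has_real_derivative - ((x s + 1/2)^2)) (at s within {0..t})"
          using xd[of s] that by (auto intro: has_field_derivative_at_within)
        ultimately show ?thesis using DERIV_diff by fastforce
      qed
      have A: "(\<lambda>s. y s - x s - \<epsilon>/\<delta>) t \<le> 0"
      proof (rule barrier[OF t0])
        fix s assume s: "s \<in> {0..t}"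
        show "((\<lambda>s. y s - x s - \<epsilon>/\<delta>) has_real_derivative (y' s + (x s + 1/2)^2)) (at s within {0..t})"
          using DERIV_diff[OF wd[OF s] DERIV_const[of "\<epsilon>/\<delta>"]] by simp
        assume pos: "(\<lambda>s. y s - x s - \<epsilon>/\<delta>) s > 0"
        have sd: "s \<in> time_dom \<tau>" using s sub by auto
        have "(y s + 1/2 + (x s + 1/2)) * ((y s + 1/2) - (x s + 1/2)) > \<epsilon>"
          using alg[OF \<delta> yH[OF sd] xpos[of s], of \<epsilon>] \<epsilon> s pos by auto
        thus "y' s + (x s + 1/2)^2 < 0" using ye[OF sd]
          by (simp add: power2_eq_square algebra_simps abs_le_iff)
      next
        show "(\<lambda>s. y s - x s - \<epsilon>/\<delta>) 0 \<le> 0" using \<epsilon> \<delta> by (simp add: x_def v0_def)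
      qed
      have B: "(\<lambda>s. x s - y s - \<epsilon>/\<delta>) t \<le> 0"
      proof (rule barrier[OF t0])
        fix s assume s: "s \<in> {0..t}"
        show "((\<lambda>s. x s - y s - \<epsilon>/\<delta>) has_real_derivative (- (y' s + (x s + 1/2)^2))) (at s within {0..t})"
          using DERIV_diff[OF DERIV_minus[OF wd[OF s]] DERIV_const[of "\<epsilon>/\<delta>"]] by simp
        assume pos: "(\<lambda>s. x s - y s - \<epsilon>/\<delta>) s > 0"
        have sd: "s \<in> time_dom \<tau>" using s sub by auto
        have "((x s + 1/2) + (y s + 1/2)) * ((x s + 1/2) - (y s + 1/2)) > \<epsilon>"
          using alg2[OF \<delta> yH[OF sd] xpos[of s], of \<epsilon>] \<epsilon> s pos by auto
        thus "- (y' s + (x s + 1/2)^2) < 0" using ye[OF sd]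
          by (simp add: power2_eq_square algebra_simps abs_le_iff)
      next
        show "(\<lambda>s. x s - y s - \<epsilon>/\<delta>) 0 \<le> 0" using \<epsilon> \<delta> by (simp add: x_def v0_def)
      qed
      show "\<bar>x t - y t\<bar> \<le> 1/\<delta> * \<epsilon>" using A B by simp
    qed
  next
    show "0 < 1/\<delta>" using \<delta> by simp
  qed
qed
end
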